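(* Let $b>-1$, $b\neq0$, and let $C$ be the curve $y^2+(x^2-1)(x^2+b)=0$; write this equation as $y^2+x^4+Ax^2+B=0$ (so $A=b-1$, $B=-b$). Then the convex hull of $C(\mathbb{R})$ in $\mathbb{R}^2$ is the set of $(x,y)\in\mathbb{R}^2$ for which there exist $u_2,u_3,u_4,v_1,v_2\in\mathbb{R}$ such that $$\begin{pmatrix}1&x&u_2&y\\ x&u_2&u_3&v_1\\ u_2&u_3&u_4&v_2\\ y&v_1&v_2&-B-Au_2-u_4\end{pmatrix}\succeq0.$$
   Context: $S\succeq0$ means the real symmetric matrix $S$ is positive semidefinite. *)

theory Defs
  imports "HOL-Analysis.Analysis"
begin

definition psd :: "nat \<Rightarrow> (nat \<Rightarrow> nat \<Rightarrow> real) \<Rightarrow> bool" where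
  "psd n M \<longleftrightarrow> (\<forall>i<n. \<forall>j<n. M i j = M j i) \<and>
     (\<forall>v :: nat \<Rightarrow> real. 0 \<le> (\<Sum>i<n. \<Sum>j<n. v i * M i j * v j))"

definition mat_of_rows :: "real list list \<Rightarrow> nat \<Rightarrow> nat \<Rightarrow> real" where
  "mat_of_rows rs i j = rs ! i ! j"

end

theory Submission
  imports Defs
begin

lemma sum4: "(\<Sum>i<(4::nat). f i) = f 0 + f 1 + f 2 + (f 3 :: real)"
  by (simp add: eval_nat_numeral)

lemma all4: "(\<forall>i<(4::nat). P i) \<longleftrightarrow> P 0 \<and> P 1 \<and> P 2 \<and> P 3"
  by (auto simp: eval_nat_numeral less_Suc_eq)

lemma psdM:
  "psd 4 (mat_of_rows [[1,x,u2,y],[x,u2,u3,v1],[u2,u3,u4,v2],[y,v1,v2,e]]) \<longleftrightarrow>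
   (\<forall>w0 w1 w2 w3. 0 \<le> w0*w0 + 2*w0*w1*x + 2*w0*w2*u2 + 2*w0*w3*y + w1*w1*u2 + 2*w1*w2*u3 + 2*w1*w3 * v1
        + w2*w2*u4 + 2*w2*w3 * v2 + w3*w3*e)"
proof -
  have E: "(\<Sum>i<4. \<Sum>j<4. v i * mat_of_rows [[1,x,u2,y],[x,u2,u3,v1],[u2,u3,u4,v2],[y,v1,v2,e]] i j * v j)
     = v 0 * v 0 + 2 * v 0 * v 1*x + 2 * v 0 * v 2*u2 + 2 * v 0 * v 3*y + v 1 * v 1*u2 + 2 * v 1 * v 2*u3 + 2 * v 1 * v 3 * v1
        + v 2 * v 2*u4 + 2 * v 2 * v 3 * v2 + v 3 * v 3*e" for v :: "nat \<Rightarrow> real"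
    by (simp add: sum4 mat_of_rows_def algebra_simps)
  have S: "\<forall>i<4. \<forall>j<4. mat_of_rows [[1,x,u2,y],[x,u2,u3,v1],[u2,u3,u4,v2],[y,v1,v2,e]] i j
     = mat_of_rows [[1,x,u2,y],[x,u2,u3,v1],[u2,u3,u4,v2],[y,v1,v2,e]] j i"
    by (simp add: all4 mat_of_rows_def)
  show ?thesis
  proof
    assume "psd 4 (mat_of_rows [[1,x,u2,y],[x,u2,u3,v1],[u2,u3,u4,v2],[y,v1,v2,e]])"
    then have H: "\<And>v::nat\<Rightarrow>real. 0 \<le> v 0 * v 0 + 2 * v 0 * v 1*x + 2 * v 0 * v 2*u2 + 2 * v 0 * v 3*y + v 1 * v 1*u2 + 2 * v 1 * v 2*u3 + 2 * v 1 * v 3 * v1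
        + v 2 * v 2*u4 + 2 * v 2 * v 3 * v2 + v 3 * v 3*e" unfolding psd_def E by blast
    show "\<forall>w0 w1 w2 w3. 0 \<le> w0*w0 + 2*w0*w1*x + 2*w0*w2*u2 + 2*w0*w3*y + w1*w1*u2 + 2*w1*w2*u3 + 2*w1*w3 * v1
        + w2*w2*u4 + 2*w2*w3 * v2 + w3*w3*e"
    proof (intro allI)
      fix w0 w1 w2 w3 :: real
      show "0 \<le> w0*w0 + 2*w0*w1*x + 2*w0*w2*u2 + 2*w0*w3*y + w1*w1*u2 + 2*w1*w2*u3 + 2*w1*w3 * v1
        + w2*w2*u4 + 2*w2*w3 * v2 + w3*w3*e"
        using H[of "\<lambda>i. if i = 0 then w0 else if i = 1 then w1 else if i = 2 then w2 else w3"] by simp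
    qed
  next
    assume H: "\<forall>w0 w1 w2 w3. 0 \<le> w0*w0 + 2*w0*w1*x + 2*w0*w2*u2 + 2*w0*w3*y + w1*w1*u2 + 2*w1*w2*u3 + 2*w1*w3 * v1
        + w2*w2*u4 + 2*w2*w3 * v2 + w3*w3*e"
    show "psd 4 (mat_of_rows [[1,x,u2,y],[x,u2,u3,v1],[u2,u3,u4,v2],[y,v1,v2,e]])"
      unfolding psd_def E using S H by blast
  qed
qed

lemma seg1:
  fixes K :: "(real \<times> real) set"
  assumes K: "convex K" and "(a1, c) \<in> K" "(a2, c) \<in> K" "a1 \<le> z" "z \<le> a2"
  shows "(z, c) \<in> K"
proof (cases "a1 = a2")
  case True then show ?thesis using assms by auto
next
  case False
  define u where "u = (z - a1) / (a2 - a1)"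
  have u: "0 \<le> u" "u \<le> 1" using assms False by (auto simp: u_def field_simps)
  have "(1 - u) *\<^sub>R (a1, c) + u *\<^sub>R (a2, c) \<in> K"
    using convexD[OF K assms(2,3), of "1-u" u] u by auto
  moreover have "(1 - u) *\<^sub>R (a1, c) + u *\<^sub>R (a2, c) = (z, c)"
  proof -
    have d: "a2 - a1 \<noteq> 0" using False by simp
    have e: "u * (a2 - a1) = z - a1" unfolding u_def using d by simp
    have "(1 - u) * a1 + u * a2 = a1 + u * (a2 - a1)" by (simp add: algebra_simps)
    also have "\<dots> = z" using e by simp
    finally have "(1 - u) * a1 + u * a2 = z" .
    then show ?thesis by (simp add: algebra_simps)
  qed
  ultimately show ?thesis by simp
qed

lemma seg2:
  fixes K :: "(real \<times> real) set"
  assumes K: "convex K" and "(c, a1) \<in> K" "(c, a2) \<in> K" "a1 \<le> z" "z \<le> a2"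
  shows "(c, z) \<in> K"
proof (cases "a1 = a2")
  case True then show ?thesis using assms by auto
next
  case False
  define u where "u = (z - a1) / (a2 - a1)"
  have u: "0 \<le> u" "u \<le> 1" using assms False by (auto simp: u_def field_simps)
  have "(1 - u) *\<^sub>R (c, a1) + u *\<^sub>R (c, a2) \<in> K"
    using convexD[OF K assms(2,3), of "1-u" u] u by auto
  moreover have "(1 - u) *\<^sub>R (c, a1) + u *\<^sub>R (c, a2) = (c, z)"
  proof -
    have d: "a2 - a1 \<noteq> 0" using False by simp
    have e: "u * (a2 - a1) = z - a1" unfolding u_def using d by simp
    have "(1 - u) * a1 + u * a2 = a1 + u * (a2 - a1)" by (simp add: algebra_simps)
    also have "\<dots> = z" using e by simp
    finally have "(1 - u) * a1 + u * a2 = z" .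
    then show ?thesis by (simp add: algebra_simps)
  qed
  ultimately show ?thesis by simp
qed

theorem mainTheorem11:
  fixes b A B :: real
  assumes "b > -1" and "b \<noteq> 0"
    and "A = b - 1" and "B = - b"
  shows "convex hull {(x::real, y::real). y^2 + (x^2 - 1) * (x^2 + b) = 0}
       = {(x::real, y::real). \<exists>u2 u3 u4 v1 v2 :: real.
            psd 4 (mat_of_rows
              [[1,  x,  u2, y],
               [x,  u2, u3, v1],
               [u2, u3, u4, v2],
               [y,  v1, v2, - B - A * u2 - u4]])}"
  (is "convex hull ?C = ?T")
proof -
  have T: "?T = {(x::real, y::real). \<exists>u2 u3 u4 v1 v2 :: real. \<forall>w0 w1 w2 w3.
      0 \<le> w0*w0 + 2*w0*w1*x + 2*w0*w2*u2 + 2*w0*w3*y + w1*w1*u2 + 2*w1*w2*u3 + 2*w1*w3 * v1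
        + w2*w2*u4 + 2*w2*w3 * v2 + w3*w3*(- B - A * u2 - u4)}"
    by (simp only: psdM)
  have sub1: "convex hull ?C \<subseteq> ?T"
  proof (rule hull_minimal)
    show "?C \<subseteq> ?T"
    proof
      fix p assume "p \<in> ?C"
      then obtain x y where p: "p = (x, y)" and c: "y^2 + (x^2 - 1) * (x^2 + b) = 0" by auto
      have e: "- B - A * x^2 - x^2 * x^2 = y * y"
        using c unfolding assms(3,4) by (simp add: power2_eq_square algebra_simps)
      have "\<forall>w0 w1 w2 w3.
      0 \<le> w0*w0 + 2*w0*w1*x + 2*w0*w2*x^2 + 2*w0*w3*y + w1*w1*x^2 + 2*w1*w2*(x^3) + 2*w1*w3 * (x*y)
        + w2*w2*(x^2*x^2) + 2*w2*w3 * (x^2*y) + w3*w3*(- B - A * x^2 - x^2*x^2)"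
      proof (intro allI)
        fix w0 w1 w2 w3 :: real
        have "w0*w0 + 2*w0*w1*x + 2*w0*w2*x^2 + 2*w0*w3*y + w1*w1*x^2 + 2*w1*w2*(x^3) + 2*w1*w3 * (x*y)
        + w2*w2*(x^2*x^2) + 2*w2*w3 * (x^2*y) + w3*w3*(- B - A * x^2 - x^2*x^2)
          = (w0 + w1*x + w2*x^2 + w3*y)^2"
          unfolding e by (simp add: power2_eq_square power3_eq_cube algebra_simps)
        then show "0 \<le> w0*w0 + 2*w0*w1*x + 2*w0*w2*x^2 + 2*w0*w3*y + w1*w1*x^2 + 2*w1*w2*(x^3) + 2*w1*w3 * (x*y)
        + w2*w2*(x^2*x^2) + 2*w2*w3 * (x^2*y) + w3*w3*(- B - A * x^2 - x^2*x^2)" by simp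
      qed
      then show "p \<in> ?T" unfolding T p by blast
    qed
  next
    show "convex ?T"
      unfolding T convex_def
    proof (clarsimp)
      fix x y x' y' u v :: real and u2 u3 u4 v1 v2 u2' u3' u4' v1' v2' :: real
      assume h1: "\<forall>w0 w1 w2 w3.
      0 \<le> w0*w0 + 2*w0*w1*x + 2*w0*w2*u2 + 2*w0*w3*y + w1*w1*u2 + 2*w1*w2*u3 + 2*w1*w3 * v1
        + w2*w2*u4 + 2*w2*w3 * v2 + w3*w3*(- B - A * u2 - u4)"
      and h2: "\<forall>w0 w1 w2 w3.
      0 \<le> w0*w0 + 2*w0*w1*x' + 2*w0*w2*u2' + 2*w0*w3*y' + w1*w1*u2' + 2*w1*w2*u3' + 2*w1*w3 * v1'
        + w2*w2*u4' + 2*w2*w3 * v2' + w3*w3*(- B - A * u2' - u4')"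
      and uv: "0 \<le> u" "0 \<le> v" "u + v = 1"
      show "\<exists>u2 u3 u4 v1 v2. \<forall>w0 w1 w2 w3.
      0 \<le> w0*w0 + 2*w0*w1*(u*x+ v *x') + 2*w0*w2*u2 + 2*w0*w3*(u*y+ v *y') + w1*w1*u2 + 2*w1*w2*u3 + 2*w1*w3 * v1
        + w2*w2*u4 + 2*w2*w3 * v2 + w3*w3*(- B - A * u2 - u4)"
      proof (intro exI allI)
        fix w0 w1 w2 w3 :: real
        let ?Q = "w0*w0 + 2*w0*w1*x + 2*w0*w2*u2 + 2*w0*w3*y + w1*w1*u2 + 2*w1*w2*u3 + 2*w1*w3 * v1
        + w2*w2*u4 + 2*w2*w3 * v2 + w3*w3*(- B - A * u2 - u4)"
        let ?Q' = "w0*w0 + 2*w0*w1*x' + 2*w0*w2*u2' + 2*w0*w3*y' + w1*w1*u2' + 2*w1*w2*u3' + 2*w1*w3 * v1'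
        + w2*w2*u4' + 2*w2*w3 * v2' + w3*w3*(- B - A * u2' - u4')"
        have q: "0 \<le> ?Q" "0 \<le> ?Q'" using h1 h2 by blast+
        have "0 \<le> u * ?Q + v * ?Q'" using q uv by simp
        also have "u * ?Q + v * ?Q' = w0*w0 + 2*w0*w1*(u*x+ v *x') + 2*w0*w2*(u*u2+ v *u2') + 2*w0*w3*(u*y+ v *y') + w1*w1*(u*u2+ v *u2') + 2*w1*w2*(u*u3+ v *u3') + 2*w1*w3 * (u* v1+ v * v1')
        + w2*w2*(u*u4+ v *u4') + 2*w2*w3 * (u* v2+ v * v2') + w3*w3*(- B - A * (u*u2+ v *u2') - (u*u4+ v *u4'))"
        proof -
          have v: "v = 1 - u" using uv by simp
          show ?thesis unfolding v by (simp add: algebra_simps)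
        qed
        finally show "0 \<le> w0*w0 + 2*w0*w1*(u*x+ v *x') + 2*w0*w2*(u*u2+ v *u2') + 2*w0*w3*(u*y+ v *y') + w1*w1*(u*u2+ v *u2') + 2*w1*w2*(u*u3+ v *u3') + 2*w1*w3 * (u* v1+ v * v1')
        + w2*w2*(u*u4+ v *u4') + 2*w2*w3 * (u* v2+ v * v2') + w3*w3*(- B - A * (u*u2+ v *u2') - (u*u4+ v *u4'))" .
      qed
    qed
  qed
  have sub2: "?T \<subseteq> convex hull ?C"
  proof
    fix p assume "p \<in> ?T"
    then obtain x0 y0 u2 u3 u4 v1 v2 where p: "p = (x0, y0)" and h: "\<forall>w0 w1 w2 w3.
      0 \<le> w0*w0 + 2*w0*w1*x0 + 2*w0*w2*u2 + 2*w0*w3*y0 + w1*w1*u2 + 2*w1*w2*u3 + 2*w1*w3 * v1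
        + w2*w2*u4 + 2*w2*w3 * v2 + w3*w3*(- B - A * u2 - u4)"
      unfolding T by blast
    have i1: "x0^2 \<le> u2" using h[rule_format, of "-x0" 1 0 0] by (simp add: power2_eq_square)
    have i2: "y0^2 \<le> - B - A * u2 - u4" using h[rule_format, of "-y0" 0 0 1] by (simp add: power2_eq_square)
    have i3: "u2^2 \<le> u4" using h[rule_format, of "-u2" 0 1 0] by (simp add: power2_eq_square)
    have t0: "0 \<le> u2" using i1 by (meson order_trans zero_le_power2)
    have pt: "y0^2 \<le> (1 - u2) * (u2 + b)" using i2 i3 assms(3,4)
      by (simp add: algebra_simps power2_eq_square)
    have p0: "0 \<le> (1 - u2) * (u2 + b)" using pt by (meson order_trans zero_le_power2)
    define X where "X = sqrt u2"
    define Y where "Y = sqrt ((1 - u2) * (u2 + b))"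
    have X2: "X^2 = u2" using t0 by (simp add: X_def)
    have Y2: "Y^2 = (1 - u2) * (u2 + b)" using p0 by (simp add: Y_def)
    have ax: "\<bar>x0\<bar> \<le> X" unfolding X_def
      using real_sqrt_le_mono[OF i1] by simp
    have ay: "\<bar>y0\<bar> \<le> Y" unfolding Y_def
      using real_sqrt_le_mono[OF pt] by simp
    have onC: "(s, t) \<in> ?C" if "s^2 = u2" "t^2 = (1 - u2) * (u2 + b)" for s t
      by (simp only: mem_Collect_eq case_prod_conv that) (simp add: algebra_simps)
    have K: "convex (convex hull ?C)" by (rule convex_convex_hull)
    have m: "(s, t) \<in> convex hull ?C" if "s^2 = u2" "t^2 = (1 - u2) * (u2 + b)" for s t
      by (rule hull_inc[OF onC[OF that]])
    have c1: "(X, Y) \<in> convex hull ?C" "(-X, Y) \<in> convex hull ?C"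
      "(X, -Y) \<in> convex hull ?C" "(-X, -Y) \<in> convex hull ?C"
    proof -
      have a: "(-X)^2 = u2" using X2 by simp
      have c: "(-Y)^2 = (1 - u2) * (u2 + b)" using Y2 by simp
      show "(X, Y) \<in> convex hull ?C" by (rule m[OF X2 Y2])
      show "(-X, Y) \<in> convex hull ?C" by (rule m[OF a Y2])
      show "(X, -Y) \<in> convex hull ?C" by (rule m[OF X2 c])
      show "(-X, -Y) \<in> convex hull ?C" by (rule m[OF a c])
    qed
    have d1: "(x0, Y) \<in> convex hull ?C"
      using seg1[OF K c1(2) c1(1)] ax by simp
    have d2: "(x0, -Y) \<in> convex hull ?C"
      using seg1[OF K c1(4) c1(3)] ax by simp
    show "p \<in> convex hull ?C"
      unfolding p using seg2[OF K d2 d1] ay by simp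
  qed
  show ?thesis using sub1 sub2 by blast
qed

end
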